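(* Let $R$ be an integral domain, $J$ an ideal of $R$ and $f(X)\in R[X]$ a monic polynomial of degree at least $1$. Then the ideal $I = J R[X] + f(X)R[X]$ of $R[X]$ is power stable; moreover $I^t\cap R = J^t$ for all $t\geq 1$.
   Context: An ideal $I$ of the polynomial ring $R[X]$ over an integral domain $R$ is called power stable if $I^t\cap R = (I\cap R)^t$ for all integers $t\geq 1$. *)

theory Defs
  imports "HOL-Computational_Algebra.Polynomial"
begin

definition is_ideal :: "'a::comm_ring_1 set \<Rightarrow> bool" where
  "is_ideal I \<longleftrightarrow> 0 \<in> I \<and> (\<forall>a\<in>I. \<forall>b\<in>I. a + b \<in> I) \<and> (\<forall>r. \<forall>a\<in>I. r * a \<in> I)"

definition ideal_gen :: "'a::comm_ring_1 set \<Rightarrow> 'a set" where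
  "ideal_gen S = \<Inter>{I. is_ideal I \<and> S \<subseteq> I}"

definition ideal_sum :: "'a::comm_ring_1 set \<Rightarrow> 'a set \<Rightarrow> 'a set" where
  "ideal_sum A B = {a + b | a b. a \<in> A \<and> b \<in> B}"

definition ideal_mult :: "'a::comm_ring_1 set \<Rightarrow> 'a set \<Rightarrow> 'a set" where
  "ideal_mult A B = ideal_gen {a * b | a b. a \<in> A \<and> b \<in> B}"

primrec ideal_pow :: "'a::comm_ring_1 set \<Rightarrow> nat \<Rightarrow> 'a set" where
  "ideal_pow I 0 = UNIV"
| "ideal_pow I (Suc n) = ideal_mult I (ideal_pow I n)"

definition ext_ideal :: "'a::comm_ring_1 set \<Rightarrow> 'a poly set" where
  "ext_ideal J = ideal_gen ((\<lambda>c. [:c:]) ` J)"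

definition principal_ideal :: "'a::comm_ring_1 \<Rightarrow> 'a set" where
  "principal_ideal f = {f * g | g. True}"

text \<open>Contraction I \<inter> R of an ideal of R[X] (R identified with the constants).\<close>
definition contr :: "'a::comm_ring_1 poly set \<Rightarrow> 'a set" where
  "contr I = {c. [:c:] \<in> I}"

definition power_stable :: "'a::comm_ring_1 poly set \<Rightarrow> bool" where
  "power_stable I \<longleftrightarrow> (\<forall>t::nat. t \<ge> 1 \<longrightarrow> contr (ideal_pow I t) = ideal_pow (contr I) t)"

end

theory Submission
  imports Defs
begin

lemma ideal_gen_ideal: "is_ideal (ideal_gen S)"
  unfolding ideal_gen_def is_ideal_def by blast

lemma ideal_gen_least: "is_ideal I \<Longrightarrow> S \<subseteq> I \<Longrightarrow> ideal_gen S \<subseteq> I"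
  unfolding ideal_gen_def by blast

lemma ideal_gen_sub: "S \<subseteq> ideal_gen S"
  unfolding ideal_gen_def by blast

lemma ideal_pow_ideal: "is_ideal (ideal_pow I t)"
  by (cases t) (simp_all add: ideal_mult_def ideal_gen_ideal, simp add: is_ideal_def)

lemma ideal_sum_mem:
  assumes "is_ideal I" "finite A" "\<forall>x\<in>A. g x \<in> I"
  shows "sum g A \<in> I"
  using assms(2,3)
proof (induction A rule: finite_induct)
  case empty then show ?case using assms(1) by (simp add: is_ideal_def)
next
  case (insert x F) then show ?case using assms(1) by (simp add: is_ideal_def)
qed

lemma ideal_mul_right: "is_ideal I \<Longrightarrow> a \<in> I \<Longrightarrow> a * r \<in> I"
  unfolding is_ideal_def by (metis mult.commute)

lemma ideal_neg: "is_ideal I \<Longrightarrow> a \<in> I \<Longrightarrow> - a \<in> I"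
  unfolding is_ideal_def by (metis mult_minus1)

lemma ideal_diff: "is_ideal I \<Longrightarrow> a \<in> I \<Longrightarrow> b \<in> I \<Longrightarrow> a - b \<in> I"
  using ideal_neg[of I b] unfolding is_ideal_def by (metis diff_conv_add_uminus)

definition P :: "'a::comm_ring_1 set \<Rightarrow> 'a poly set" where
  "P K = {p. \<forall>i. coeff p i \<in> K}"

lemma P_ideal:
  assumes "is_ideal K" shows "is_ideal (P K)"
proof -
  have "coeff (r * p) i \<in> K" if "p \<in> P K" for r p i
    unfolding coeff_mult
    by (rule ideal_sum_mem[OF assms]) (use that assms in \<open>auto simp: P_def is_ideal_def\<close>)
  then show ?thesis using assms unfolding is_ideal_def P_def by auto
qed

lemma P_mult:
  assumes "p \<in> P A" "q \<in> P B"
  shows "p * q \<in> P (ideal_mult A B)"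
  unfolding P_def
proof (intro CollectI allI)
  fix n
  show "coeff (p * q) n \<in> ideal_mult A B"
    unfolding coeff_mult ideal_mult_def
    by (rule ideal_sum_mem[OF ideal_gen_ideal])
       (use assms in \<open>auto simp: P_def intro!: ideal_gen_sub[THEN subsetD]\<close>)
qed

definition S :: "'a::comm_ring_1 set \<Rightarrow> 'a poly \<Rightarrow> 'a poly set" where
  "S K f = {g + f * h | g h. g \<in> P K}"

lemma S_ideal:
  assumes "is_ideal K" shows "is_ideal (S K f)"
proof -
  have PK: "is_ideal (P K)" by (rule P_ideal[OF assms])
  have "0 \<in> S K f" unfolding S_def using PK by (auto simp: is_ideal_def intro!: exI[of _ 0])
  moreover have "a + b \<in> S K f" if ab: "a \<in> S K f" "b \<in> S K f" for a b
  proof -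
    obtain g1 h1 where "a = g1 + f * h1" "g1 \<in> P K"
      using ab(1) unfolding S_def by auto
    moreover obtain g2 h2 where "b = g2 + f * h2" "g2 \<in> P K"
      using ab(2) unfolding S_def by auto
    ultimately have "a + b = (g1 + g2) + f * (h1 + h2)" "g1 + g2 \<in> P K"
      using PK by (auto simp: algebra_simps is_ideal_def)
    then show ?thesis unfolding S_def by blast
  qed
  moreover have "r * a \<in> S K f" if ab: "a \<in> S K f" for r a
  proof -
    obtain g1 h1 where "a = g1 + f * h1" "g1 \<in> P K"
      using ab unfolding S_def by auto
    then have "r * a = (r * g1) + f * (r * h1)" "r * g1 \<in> P K"
      using PK unfolding is_ideal_def by (auto simp: algebra_simps) (metis mult.commute)
    then show ?thesis unfolding S_def by blast
  qed
  ultimately show ?thesis unfolding is_ideal_def by blast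
qed

lemma monic_key:
  fixes f :: "'a::idom poly"
  assumes K: "is_ideal K" and lc: "lead_coeff f = 1" and df: "degree f \<ge> 1"
  shows "[:c:] - f * h \<in> P K \<Longrightarrow> c \<in> K"
proof (induction "if h = 0 then 0 else Suc (degree h)" arbitrary: h rule: less_induct)
  case less
  have PK: "is_ideal (P K)" by (rule P_ideal[OF K])
  show ?case
  proof (cases "h = 0")
    case True
    then show ?thesis using less.prems unfolding P_def by (auto dest: spec[of _ 0])
  next
    case False
    define d where "d = degree h"
    define a where "a = lead_coeff h"
    have f0: "f \<noteq> 0" using lc by auto
    have "coeff (f * h) (degree f + d) = a"
      using degree_mult_eq[OF f0 False] lead_coeff_mult[of f h] lc unfolding a_def d_def by simp
    moreover have "coeff ([:c:] - f * h) (degree f + d) \<in> K" using less.prems unfolding P_def by auto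
    moreover have "coeff [:c:] (degree f + d) = 0" using df by (simp add: coeff_pCons split: nat.split)
    ultimately have "- a \<in> K" by simp
    then have aK: "a \<in> K" using ideal_neg[OF K] by fastforce
    define h' where "h' = h - monom a d"
    have mP: "monom a d \<in> P K" using aK K unfolding P_def is_ideal_def by (auto simp: coeff_monom)
    have "f * monom a d \<in> P K" using mP PK unfolding is_ideal_def by blast
    then have "([:c:] - f * h) + f * monom a d \<in> P K" using less.prems PK unfolding is_ideal_def by blast
    moreover have "([:c:] - f * h) + f * monom a d = [:c:] - f * h'" unfolding h'_def by (simp add: algebra_simps)
    ultimately have prem: "[:c:] - f * h' \<in> P K" by simp
    have ch: "coeff h' i = 0" if "i \<ge> d" for i
      using that unfolding h'_def a_def d_def
      by (cases "i = degree h") (auto simp: coeff_monom coeff_eq_0)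
    have lt: "(if h' = 0 then 0 else Suc (degree h')) < (if h = 0 then 0 else Suc (degree h))"
    proof (cases "h' = 0")
        case True then show ?thesis using False by simp
    next
      case nz: False
      have "d > 0"
      proof (rule ccontr)
        assume "\<not> d > 0"
        then have "\<forall>i. coeff h' i = 0" using ch by auto
        then show False using nz by (simp add: poly_eq_iff)
      qed
      have "degree h' \<le> d - 1" by (rule degree_le) (use ch \<open>d > 0\<close> in auto)
      then show ?thesis using False \<open>d > 0\<close> nz unfolding d_def by simp
    qed
    show ?thesis by (rule less.hyps[OF lt prem])
  qed
qed

lemma const_P: "is_ideal J \<Longrightarrow> c \<in> J \<Longrightarrow> [:c:] \<in> P J"
  unfolding P_def is_ideal_def by (auto simp: coeff_pCons split: nat.split)

lemma ext_sub_P: "is_ideal J \<Longrightarrow> ext_ideal J \<subseteq> P J"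
  unfolding ext_ideal_def by (rule ideal_gen_least[OF P_ideal]) (auto intro: const_P)

lemma pow_sub_S:
  fixes J :: "'a::comm_ring_1 set"
  assumes J: "is_ideal J"
  shows "ideal_pow (ideal_sum (ext_ideal J) (principal_ideal f)) t \<subseteq> S (ideal_pow J t) f"
proof (induction t)
  case 0
  have "p \<in> S UNIV f" for p
  proof -
    have "p = p + f * 0" "p \<in> P UNIV" by (auto simp: P_def)
    then show ?thesis unfolding S_def by blast
  qed
  then show ?case by auto
next
  case (Suc t)
  let ?I = "ideal_sum (ext_ideal J) (principal_ideal f)"
  show ?case unfolding ideal_pow.simps(2)[of ?I] ideal_mult_def[of ?I]
  proof (rule ideal_gen_least[OF S_ideal[OF ideal_pow_ideal]], safe)
    fix a b assume a: "a \<in> ?I" and b: "b \<in> ideal_pow ?I t"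
    obtain e g where e: "a = e + f * g" "e \<in> ext_ideal J"
      using a unfolding ideal_sum_def principal_ideal_def by auto
    then have eP: "e \<in> P J" using ext_sub_P[OF J] by auto
    obtain g2 h2 where g2: "b = g2 + f * h2" "g2 \<in> P (ideal_pow J t)"
      using b Suc.IH unfolding S_def by auto
    have "e * g2 \<in> P (ideal_pow J (Suc t))" using P_mult[OF eP g2(2)] by simp
    moreover have "a * b = e * g2 + f * (e * h2 + g * g2 + f * g * h2)"
      using e g2 by (simp add: algebra_simps)
    ultimately show "a * b \<in> S (ideal_pow J (Suc t)) f" unfolding S_def by blast
  qed
qed

lemma contr_ideal:
  fixes Q :: "'a::comm_ring_1 poly set"
  assumes "is_ideal Q" shows "is_ideal {c. [:c:] \<in> Q}"
proof -
  have m: "[:r * x:] = [:r:] * [:x:]" for r x :: 'a by simp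
  have a: "[:x + y:] = [:x:] + [:y:]" for x y :: 'a by simp
  have Q: "0 \<in> Q" "\<And>x y. x \<in> Q \<Longrightarrow> y \<in> Q \<Longrightarrow> x + y \<in> Q" "\<And>r x. x \<in> Q \<Longrightarrow> r * x \<in> Q"
    using assms unfolding is_ideal_def by auto
  show ?thesis unfolding is_ideal_def
  proof (intro conjI ballI allI)
    show "0 \<in> {c. [:c:] \<in> Q}" using Q(1) by simp
  next
    fix x y assume "x \<in> {c. [:c:] \<in> Q}" "y \<in> {c. [:c:] \<in> Q}"
    then have "[:x:] + [:y:] \<in> Q" by (intro Q(2)) auto
    then show "x + y \<in> {c. [:c:] \<in> Q}" unfolding a[symmetric] by simp
  next
    fix r x assume "x \<in> {c. [:c:] \<in> Q}"
    then have "[:r:] * [:x:] \<in> Q" by (intro Q(3)) auto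
    then show "r * x \<in> {c. [:c:] \<in> Q}" unfolding m[symmetric] by simp
  qed
qed

lemma const_in_pow:
  fixes J :: "'a::comm_ring_1 set"
  assumes J: "is_ideal J"
  shows "c \<in> ideal_pow J t \<Longrightarrow> [:c:] \<in> ideal_pow (ideal_sum (ext_ideal J) (principal_ideal f)) t"
proof (induction t arbitrary: c)
  case 0 then show ?case by simp
next
  case (Suc t)
  let ?I = "ideal_sum (ext_ideal J) (principal_ideal f)"
  define T where "T = {c. [:c:] \<in> ideal_pow ?I (Suc t)}"
  have TI: "is_ideal T"
    unfolding T_def by (rule contr_ideal[OF ideal_pow_ideal])
  have "ideal_gen {a * b |a b. a \<in> J \<and> b \<in> ideal_pow J t} \<subseteq> T"
  proof (rule ideal_gen_least[OF TI], safe)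
    fix a b assume a: "a \<in> J" and b: "b \<in> ideal_pow J t"
    have "[:a:] \<in> ext_ideal J" unfolding ext_ideal_def
      using a by (auto intro!: ideal_gen_sub[THEN subsetD])
    moreover have "[:a:] = [:a:] + f * 0" by simp
    ultimately have "[:a:] \<in> ?I" unfolding ideal_sum_def principal_ideal_def by blast
    moreover have "[:b:] \<in> ideal_pow ?I t" using Suc.IH b by blast
    ultimately have "[:a:] * [:b:] \<in> {x * y | x y. x \<in> ?I \<and> y \<in> ideal_pow ?I t}" by blast
    then have ab: "[:a:] * [:b:] \<in> ideal_pow ?I (Suc t)"
      unfolding ideal_pow.simps(2)[of ?I] ideal_mult_def by (rule ideal_gen_sub[THEN subsetD])
    have e: "[:a * b:] = [:a:] * [:b:]" by simp
    show "a * b \<in> T" unfolding T_def mem_Collect_eq e by (rule ab)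
  qed
  then have "ideal_pow J (Suc t) \<subseteq> T" by (simp only: ideal_pow.simps ideal_mult_def)
  then have "c \<in> T" using Suc.prems by (rule subsetD)
  then show ?case unfolding T_def by simp
qed

lemma contr_pow:
  fixes J :: "'a::idom set" and f :: "'a poly"
  assumes J: "is_ideal J" and lc: "lead_coeff f = 1" and df: "degree f \<ge> 1"
  shows "contr (ideal_pow (ideal_sum (ext_ideal J) (principal_ideal f)) t) = ideal_pow J t"
proof
  show "contr (ideal_pow (ideal_sum (ext_ideal J) (principal_ideal f)) t) \<subseteq> ideal_pow J t"
  proof
    fix c assume "c \<in> contr (ideal_pow (ideal_sum (ext_ideal J) (principal_ideal f)) t)"
    then have "[:c:] \<in> S (ideal_pow J t) f" using pow_sub_S[OF J] unfolding contr_def by auto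
    then obtain g h where "[:c:] = g + f * h" "g \<in> P (ideal_pow J t)" unfolding S_def by auto
    then have "[:c:] - f * h \<in> P (ideal_pow J t)" by simp
    then show "c \<in> ideal_pow J t" by (rule monic_key[OF ideal_pow_ideal lc df])
  qed
  show "ideal_pow J t \<subseteq> contr (ideal_pow (ideal_sum (ext_ideal J) (principal_ideal f)) t)"
    using const_in_pow[OF J] unfolding contr_def by auto
qed

lemma sum_ideal:
  assumes A: "is_ideal A" and B: "is_ideal B" shows "is_ideal (ideal_sum A B)"
proof -
  have "0 \<in> ideal_sum A B" unfolding ideal_sum_def
  proof -
    have "(0::'a) = 0 + 0" by simp
    then show "0 \<in> {a + b |a b. a \<in> A \<and> b \<in> B}" using A B unfolding is_ideal_def by blast
  qed
  moreover have "x + y \<in> ideal_sum A B" if xy: "x \<in> ideal_sum A B" "y \<in> ideal_sum A B" for x y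
  proof -
    obtain a1 b1 where 1: "x = a1 + b1" "a1 \<in> A" "b1 \<in> B" using xy(1) unfolding ideal_sum_def by blast
    obtain a2 b2 where 2: "y = a2 + b2" "a2 \<in> A" "b2 \<in> B" using xy(2) unfolding ideal_sum_def by blast
    have "x + y = (a1 + a2) + (b1 + b2)" using 1 2 by (simp add: algebra_simps)
    moreover have "a1 + a2 \<in> A" "b1 + b2 \<in> B" using 1 2 A B unfolding is_ideal_def by blast+
    ultimately show ?thesis unfolding ideal_sum_def by blast
  qed
  moreover have "r * x \<in> ideal_sum A B" if xy: "x \<in> ideal_sum A B" for r x
  proof -
    obtain a1 b1 where 1: "x = a1 + b1" "a1 \<in> A" "b1 \<in> B" using xy(1) unfolding ideal_sum_def by blast
    have "r * x = r * a1 + r * b1" using 1 by (simp add: algebra_simps)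
    moreover have "r * a1 \<in> A" "r * b1 \<in> B" using 1 A B unfolding is_ideal_def by blast+
    ultimately show ?thesis unfolding ideal_sum_def by blast
  qed
  ultimately show ?thesis unfolding is_ideal_def by blast
qed

lemma principal_ideal_ideal: "is_ideal (principal_ideal f)"
proof -
  have "0 \<in> principal_ideal f" unfolding principal_ideal_def
  proof -
    have "0 = f * 0" by simp
    then show "0 \<in> {f * g |g. True}" by blast
  qed
  moreover have "x + y \<in> principal_ideal f" if xy: "x \<in> principal_ideal f" "y \<in> principal_ideal f" for x y
  proof -
    obtain g1 g2 where "x = f * g1" "y = f * g2" using xy unfolding principal_ideal_def by blast
    then have "x + y = f * (g1 + g2)" by (simp add: algebra_simps)
    then show ?thesis unfolding principal_ideal_def by blast
  qed
  moreover have "r * x \<in> principal_ideal f" if xy: "x \<in> principal_ideal f" for r x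
  proof -
    obtain g1 where "x = f * g1" using xy unfolding principal_ideal_def by blast
    then have "r * x = f * (r * g1)" by (simp add: algebra_simps)
    then show ?thesis unfolding principal_ideal_def by blast
  qed
  ultimately show ?thesis unfolding is_ideal_def by blast
qed

lemma pow1: "is_ideal J \<Longrightarrow> ideal_pow J 1 = J"
proof -
  assume J: "is_ideal J"
  have "ideal_gen {a * b |a b. a \<in> J \<and> b \<in> (UNIV::'a set)} \<subseteq> J"
    by (rule ideal_gen_least[OF J]) (use J in \<open>auto intro: ideal_mul_right\<close>)
  moreover have "J \<subseteq> ideal_gen {a * b |a b. a \<in> J \<and> b \<in> (UNIV::'a set)}"
  proof
    fix x assume "x \<in> J"
    moreover have "x = x * 1" by simp
    ultimately have "x \<in> {a * b |a b. a \<in> J \<and> b \<in> (UNIV::'a set)}" by blast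
    then show "x \<in> ideal_gen {a * b |a b. a \<in> J \<and> b \<in> (UNIV::'a set)}" by (rule ideal_gen_sub[THEN subsetD])
  qed
  ultimately show ?thesis by (simp add: ideal_mult_def)
qed

theorem theorem3p5:
  fixes J :: "'a::idom set" and f :: "'a poly"
  assumes "is_ideal J"
    and "lead_coeff f = 1"
    and "degree f \<ge> 1"
  shows "power_stable (ideal_sum (ext_ideal J) (principal_ideal f))
    \<and> (\<forall>t::nat. t \<ge> 1 \<longrightarrow>
          contr (ideal_pow (ideal_sum (ext_ideal J) (principal_ideal f)) t) = ideal_pow J t)"
proof -
  have c: "\<And>t. contr (ideal_pow (ideal_sum (ext_ideal J) (principal_ideal f)) t) = ideal_pow J t"
    by (rule contr_pow[OF assms])
  have "contr (ideal_sum (ext_ideal J) (principal_ideal f)) = J"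
  proof -
    have Iid: "is_ideal (ideal_sum (ext_ideal J) (principal_ideal f))"
      unfolding ext_ideal_def by (rule sum_ideal[OF ideal_gen_ideal principal_ideal_ideal])
    show ?thesis using c[of 1] pow1[OF assms(1)] pow1[OF Iid] by simp
  qed
  then show ?thesis unfolding power_stable_def using c by simp
qed

end
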